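(* Let $A$ be a strongly AUF algebra and let $e\in A$ be a generating idempotent. Then the map $$\mathrm{SLF}(A)\to\mathrm{SLF}(eAe),\qquad \psi\mapsto\psi|_{eAe}$$ is a linear isomorphism, whose inverse is $\mathrm{SLF}(eAe)\to\mathrm{SLF}(A)$, $\phi\mapsto\mathrm{Tr}^\phi$, where $\mathrm{Tr}^\phi$ is the left pseudotrace on $A$ associated to $\phi$ and the $A$-$(eAe)$ bimodule $Ae$.
   Context: All algebras are associative $\mathbb C$-algebras, not necessarily unital. An idempotent is an element $e$ with $e^2=e$. An algebra $A$ is AUF if there is a family $(e_i)_{i\in\mathfrak I}$ of mutually orthogonal idempotents with $\dim e_iAe_j<\infty$ and $A=\sum_{i,j}e_iAe_j$. A left $A$-module $M$ is quasicoherent if $\xi\in A\xi$ for all $\xi\in M$. Irreducible means nonzero with no nonzero proper submodules. An idempotent $e\in A$ is generating if every irreducible quasicoherent left $A$-module is a quotient of $Ae$; $A$ is strongly AUF if it is AUF and has a generating idempotent. $\mathrm{SLF}(C)$ is the space of linear $\phi:C\to\mathbb C$ with $\phi(xy)=\phi(yx)$. Note $eAe$ is unital with unit $e$, and $Ae$ is an $A$-$(eAe)$ bimodule by multiplication. Left coordinate system (for algebras $A,B$, $B$ unital, $M$ an $A$-$B$ bimodule): right $B$-module maps $\alpha_i:B\to M$, $\check\alpha^i:M\to B$, $i\in I$, such that (a) for each $\xi\in M$, $\check\alpha^i(\xi)=0$ for all but finitely many $i$ and $\sum_i\alpha_i\check\alpha^i(\xi)=\xi$; (b) for each $x\in A$,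 $x\circ\alpha_i=0$ and $\check\alpha^i\circ x=0$ for all but finitely many $i$. Given one, the left pseudotrace of $\phi\in\mathrm{SLF}(B)$ is $\mathrm{Tr}^\phi(x)=\sum_i\phi(\check\alpha^i(x\,\alpha_i(1_B)))$, $x\in A$; it is independent of the left coordinate system and lies in $\mathrm{SLF}(A)$. Under the hypotheses of the claim, the $A$-$(eAe)$ bimodule $Ae$ admits a left coordinate system, so $\mathrm{Tr}^\phi$ is defined. *)

theory Defs
  imports Complex_Main
begin

text \<open>The algebra A is the whole carrier of a type of class ring (non-unital,
associative), with a complex scalar multiplication sc making it a C-algebra.\<close>

definition calg :: "(complex \<Rightarrow> 'a::ring \<Rightarrow> 'a) \<Rightarrow> bool" where
  "calg sc \<longleftrightarrow>
     (\<forall>c x y. sc c (x + y) = sc c x + sc c y) \<and>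
     (\<forall>c d x. sc (c + d) x = sc c x + sc d x) \<and>
     (\<forall>c d x. sc (c * d) x = sc c (sc d x)) \<and>
     (\<forall>x. sc 1 x = x) \<and>
     (\<forall>c x y. sc c (x * y) = sc c x * y) \<and>
     (\<forall>c x y. sc c (x * y) = x * sc c y)"

definition idem :: "'a::ring \<Rightarrow> bool" where
  "idem e \<longleftrightarrow> e * e = e"

definition fin_dim :: "(complex \<Rightarrow> 'a::ring \<Rightarrow> 'a) \<Rightarrow> 'a set \<Rightarrow> bool" where
  "fin_dim sc S \<longleftrightarrow> (\<exists>B. finite B \<and> B \<subseteq> S \<and>
      (\<forall>x\<in>S. \<exists>c. x = (\<Sum>b\<in>B. sc (c b) b)))"

definition corner2 :: "'a::ring \<Rightarrow> 'a \<Rightarrow> 'a set" where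
  "corner2 e f = {e * a * f | a. True}"

abbreviation corner :: "'a::ring \<Rightarrow> 'a set" where
  "corner e \<equiv> corner2 e e"

text \<open>AUF: a family of mutually orthogonal idempotents, represented by its set of
members E (a family of mutually orthogonal idempotents can only repeat the element 0,
which contributes nothing), with finite-dimensional corners, and A the (finite-sum)
sum of the corners.\<close>
definition AUF :: "(complex \<Rightarrow> 'a::ring \<Rightarrow> 'a) \<Rightarrow> bool" where
  "AUF sc \<longleftrightarrow> calg sc \<and> (\<exists>E::'a set.
     (\<forall>e\<in>E. idem e) \<and>
     (\<forall>e\<in>E. \<forall>f\<in>E. e \<noteq> f \<longrightarrow> e * f = 0) \<and>
     (\<forall>e\<in>E. \<forall>f\<in>E. fin_dim sc (corner2 e f)) \<and>
     (\<forall>x. \<exists>F g. finite F \<and> F \<subseteq> E \<times> E \<and>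
            (\<forall>p\<in>F. g p \<in> corner2 (fst p) (snd p)) \<and> x = (\<Sum>p\<in>F. g p)))"

record ('a, 'm) lmod =
  carr :: "'m set"
  madd :: "'m \<Rightarrow> 'm \<Rightarrow> 'm"
  mzero :: 'm
  mscal :: "complex \<Rightarrow> 'm \<Rightarrow> 'm"
  mact :: "'a \<Rightarrow> 'm \<Rightarrow> 'm"

definition left_module :: "(complex \<Rightarrow> 'a::ring \<Rightarrow> 'a) \<Rightarrow> ('a, 'm) lmod \<Rightarrow> bool" where
  "left_module sc M \<longleftrightarrow>
     mzero M \<in> carr M \<and>
     (\<forall>x\<in>carr M. \<forall>y\<in>carr M. madd M x y \<in> carr M) \<and>
     (\<forall>c. \<forall>x\<in>carr M. mscal M c x \<in> carr M) \<and>
     (\<forall>a. \<forall>x\<in>carr M. mact M a x \<in> carr M) \<and>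
     (\<forall>x\<in>carr M. \<forall>y\<in>carr M. \<forall>z\<in>carr M. madd M (madd M x y) z = madd M x (madd M y z)) \<and>
     (\<forall>x\<in>carr M. \<forall>y\<in>carr M. madd M x y = madd M y x) \<and>
     (\<forall>x\<in>carr M. madd M (mzero M) x = x) \<and>
     (\<forall>x\<in>carr M. \<exists>y\<in>carr M. madd M x y = mzero M) \<and>
     (\<forall>x\<in>carr M. mscal M 1 x = x) \<and>
     (\<forall>c d. \<forall>x\<in>carr M. mscal M (c * d) x = mscal M c (mscal M d x)) \<and>
     (\<forall>c d. \<forall>x\<in>carr M. mscal M (c + d) x = madd M (mscal M c x) (mscal M d x)) \<and>
     (\<forall>c. \<forall>x\<in>carr M. \<forall>y\<in>carr M. mscal M c (madd M x y) = madd M (mscal M c x) (mscal M c y)) \<and>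
     (\<forall>a b. \<forall>x\<in>carr M. mact M (a * b) x = mact M a (mact M b x)) \<and>
     (\<forall>a b. \<forall>x\<in>carr M. mact M (a + b) x = madd M (mact M a x) (mact M b x)) \<and>
     (\<forall>a. \<forall>x\<in>carr M. \<forall>y\<in>carr M. mact M a (madd M x y) = madd M (mact M a x) (mact M a y)) \<and>
     (\<forall>c a. \<forall>x\<in>carr M. mact M (sc c a) x = mscal M c (mact M a x)) \<and>
     (\<forall>c a. \<forall>x\<in>carr M. mact M a (mscal M c x) = mscal M c (mact M a x))"

definition submodule :: "('a::ring, 'm) lmod \<Rightarrow> 'm set \<Rightarrow> bool" where
  "submodule M N \<longleftrightarrow> N \<subseteq> carr M \<and> mzero M \<in> N \<and>
     (\<forall>x\<in>N. \<forall>y\<in>N. madd M x y \<in> N) \<and>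
     (\<forall>c. \<forall>x\<in>N. mscal M c x \<in> N) \<and>
     (\<forall>a. \<forall>x\<in>N. mact M a x \<in> N)"

definition quasicoherent :: "('a::ring, 'm) lmod \<Rightarrow> bool" where
  "quasicoherent M \<longleftrightarrow> (\<forall>\<xi>\<in>carr M. \<exists>a. \<xi> = mact M a \<xi>)"

definition irreducible_mod :: "('a::ring, 'm) lmod \<Rightarrow> bool" where
  "irreducible_mod M \<longleftrightarrow> carr M \<noteq> {mzero M} \<and>
     (\<forall>N. submodule M N \<longrightarrow> N = {mzero M} \<or> N = carr M)"

definition module_hom :: "('a::ring, 'm) lmod \<Rightarrow> ('a, 'n) lmod \<Rightarrow> ('m \<Rightarrow> 'n) \<Rightarrow> bool" where
  "module_hom M N f \<longleftrightarrow> f ` carr M \<subseteq> carr N \<and>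
     (\<forall>x\<in>carr M. \<forall>y\<in>carr M. f (madd M x y) = madd N (f x) (f y)) \<and>
     (\<forall>c. \<forall>x\<in>carr M. f (mscal M c x) = mscal N c (f x)) \<and>
     (\<forall>a. \<forall>x\<in>carr M. f (mact M a x) = mact N a (f x))"

definition Ae_mod :: "(complex \<Rightarrow> 'a::ring \<Rightarrow> 'a) \<Rightarrow> 'a \<Rightarrow> ('a, 'a) lmod" where
  "Ae_mod sc e = \<lparr>carr = {a * e | a. True}, madd = (+), mzero = 0, mscal = sc, mact = (*)\<rparr>"

text \<open>Modules are taken with carrier in the type 'a set; every
irreducible quasicoherent module M is cyclic (M = A\<xi>) hence isomorphic to a quotient
A/L whose elements are cosets, i.e. subsets of A, so this loses no generality.\<close>
definition generating_idem :: "(complex \<Rightarrow> 'a::ring \<Rightarrow> 'a) \<Rightarrow> 'a \<Rightarrow> bool" where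
  "generating_idem sc e \<longleftrightarrow> idem e \<and>
     (\<forall>M :: ('a, 'a set) lmod. left_module sc M \<and> quasicoherent M \<and> irreducible_mod M \<longrightarrow>
        (\<exists>f. module_hom (Ae_mod sc e) M f \<and> f ` carr (Ae_mod sc e) = carr M))"

definition strongly_AUF :: "(complex \<Rightarrow> 'a::ring \<Rightarrow> 'a) \<Rightarrow> bool" where
  "strongly_AUF sc \<longleftrightarrow> AUF sc \<and> (\<exists>e. generating_idem sc e)"

text \<open>SLF(C) for a subalgebra C of A; functionals are functions on A, required to vanish
outside C so that they are determined by their values on C.\<close>
definition SLF :: "(complex \<Rightarrow> 'a::ring \<Rightarrow> 'a) \<Rightarrow> 'a set \<Rightarrow> ('a \<Rightarrow> complex) set" where
  "SLF sc C = {\<phi>. (\<forall>x\<in>C. \<forall>y\<in>C. \<phi> (x + y) = \<phi> x + \<phi> y) \<and>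
                 (\<forall>c. \<forall>x\<in>C. \<phi> (sc c x) = c * \<phi> x) \<and>
                 (\<forall>x\<in>C. \<forall>y\<in>C. \<phi> (x * y) = \<phi> (y * x)) \<and>
                 (\<forall>x. x \<notin> C \<longrightarrow> \<phi> x = 0)}"

definition restr :: "'a::ring \<Rightarrow> ('a \<Rightarrow> complex) \<Rightarrow> ('a \<Rightarrow> complex)" where
  "restr e \<psi> = (\<lambda>x. if x \<in> corner e then \<psi> x else 0)"

definition lin_on :: "(complex \<Rightarrow> 'a::ring \<Rightarrow> 'a) \<Rightarrow> 'a set \<Rightarrow> ('a \<Rightarrow> 'a) \<Rightarrow> bool" where
  "lin_on sc S f \<longleftrightarrow> (\<forall>x\<in>S. \<forall>y\<in>S. f (x + y) = f x + f y) \<and>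
                      (\<forall>c. \<forall>x\<in>S. f (sc c x) = sc c (f x))"

definition left_coord_sys ::
  "(complex \<Rightarrow> 'a::ring \<Rightarrow> 'a) \<Rightarrow> 'a \<Rightarrow> 'i set \<Rightarrow> ('i \<Rightarrow> 'a \<Rightarrow> 'a) \<Rightarrow> ('i \<Rightarrow> 'a \<Rightarrow> 'a) \<Rightarrow> bool" where
  "left_coord_sys sc e I \<alpha> ac \<longleftrightarrow>
    (let B = corner e; M = carr (Ae_mod sc e) in
     (\<forall>i\<in>I. \<alpha> i ` B \<subseteq> M \<and> lin_on sc B (\<alpha> i) \<and>
             (\<forall>b\<in>B. \<forall>b'\<in>B. \<alpha> i (b * b') = \<alpha> i b * b')) \<and>
     (\<forall>i\<in>I. ac i ` M \<subseteq> B \<and> lin_on sc M (ac i) \<and>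
             (\<forall>m\<in>M. \<forall>b\<in>B. ac i (m * b) = ac i m * b)) \<and>
     (\<forall>\<xi>\<in>M. finite {i\<in>I. ac i \<xi> \<noteq> 0} \<and>
             \<xi> = (\<Sum>i\<in>{i\<in>I. ac i \<xi> \<noteq> 0}. \<alpha> i (ac i \<xi>))) \<and>
     (\<forall>x. finite {i\<in>I. \<exists>b\<in>B. x * \<alpha> i b \<noteq> 0} \<and>
          finite {i\<in>I. \<exists>m\<in>M. ac i (x * m) \<noteq> 0}))"

text \<open>Left pseudotrace Tr^phi(x) = sum_i phi(ac i (x * alpha i 1_B)), 1_B = e; the sum
is over the (finitely many) indices with nonzero term.\<close>
definition pseudotrace ::
  "'i set \<Rightarrow> ('i \<Rightarrow> 'a \<Rightarrow> 'a) \<Rightarrow> ('i \<Rightarrow> 'a \<Rightarrow> 'a) \<Rightarrow> 'a::ring \<Rightarrow> ('a \<Rightarrow> complex) \<Rightarrow> 'a \<Rightarrow> complex" where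
  "pseudotrace I \<alpha> ac e \<phi> x =
     (\<Sum>i\<in>{i\<in>I. \<phi> (ac i (x * \<alpha> i e)) \<noteq> 0}. \<phi> (ac i (x * \<alpha> i e)))"

end

theory Submission
  imports Defs
begin

lemma calgD:
  assumes "calg sc"
  shows "sc c (x + y) = sc c x + sc c y" "sc (c + d) x = sc c x + sc d x"
    "sc (c * d) x = sc c (sc d x)" "sc 1 x = x" "sc c (x * y) = sc c x * y"
    "sc c (x * y) = x * sc c y"
  using assms unfolding calg_def by metis+

lemma calg_zero:
  assumes "calg sc" shows "sc c 0 = 0" "sc 0 x = 0"
proof -
  have "sc c (0 + 0) = sc c 0 + sc c 0" using calgD(1)[OF assms] .
  then show "sc c 0 = 0" by simp
  have "sc (0 + 0) x = sc 0 x + sc 0 x" using calgD(2)[OF assms] .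
  then show "sc 0 x = 0" by simp
qed

lemma calg_diff:
  assumes "calg sc" shows "sc c (x - y) = sc c x - sc c y"
proof -
  have "sc c (x - y + y) = sc c (x - y) + sc c y" using calgD(1)[OF assms] .
  then show ?thesis by (simp add: algebra_simps)
qed

lemma calg_neg:
  assumes "calg sc" shows "sc (-1) x = - x"
proof -
  have "sc (-1 + 1) x = sc (-1) x + sc 1 x" using calgD(2)[OF assms] .
  then show ?thesis using calg_zero[OF assms] calgD(4)[OF assms] by (simp add: eq_neg_iff_add_eq_0)
qed

lemma memM: "idem e \<Longrightarrow> x \<in> {a * e | a. True} \<longleftrightarrow> x * e = x"
  unfolding idem_def by (auto simp: mult.assoc) (metis)

lemma memB: "idem e \<Longrightarrow> x \<in> corner e \<longleftrightarrow> e * x = x \<and> x * e = x"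
  unfolding idem_def corner2_def by (auto simp: mult.assoc) (metis mult.assoc)+

lemma additive_sum:
  fixes f :: "'a::ring \<Rightarrow> 'b::ab_group_add"
  assumes add: "\<forall>x\<in>S. \<forall>y\<in>S. f (x + y) = f x + f y"
    and S0: "0 \<in> S" and Sadd: "\<forall>x\<in>S. \<forall>y\<in>S. x + y \<in> S"
    and fin: "finite U" and g: "\<forall>j\<in>U. g j \<in> S"
  shows "f (\<Sum>j\<in>U. g j) = (\<Sum>j\<in>U. f (g j))" "(\<Sum>j\<in>U. g j) \<in> S"
proof -
  have f0: "f 0 = 0" using add S0 by (metis add.right_neutral add_left_cancel)
  have "f (\<Sum>j\<in>U. g j) = (\<Sum>j\<in>U. f (g j)) \<and> (\<Sum>j\<in>U. g j) \<in> S"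
    using fin g
  proof (induction U rule: finite_induct)
    case empty then show ?case using f0 S0 by simp
  next
    case (insert x F)
    then show ?case using add Sadd by simp
  qed
  then show "f (\<Sum>j\<in>U. g j) = (\<Sum>j\<in>U. f (g j))" "(\<Sum>j\<in>U. g j) \<in> S" by auto
qed

context
  fixes sc :: "complex \<Rightarrow> 'a::ring \<Rightarrow> 'a" and e :: 'a and I :: "'i set"
    and \<alpha> ac :: "'i \<Rightarrow> 'a \<Rightarrow> 'a" and \<phi> :: "'a \<Rightarrow> complex"
  assumes cs: "calg sc" and ie: "idem e" and lcs: "left_coord_sys sc e I \<alpha> ac"
    and phi: "\<phi> \<in> SLF sc (corner e)"
begin

abbreviation "MM \<equiv> {a * e | a. True}"
abbreviation "BB \<equiv> corner e"

lemma ee: "e * e = e" using ie unfolding idem_def .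

lemma inM: "x \<in> MM \<longleftrightarrow> x * e = x" using memM[OF ie] .
lemma inB: "x \<in> BB \<longleftrightarrow> e * x = x \<and> x * e = x" using memB[OF ie] .

lemma B_M: "x \<in> BB \<Longrightarrow> x \<in> MM" using inM inB by auto
lemma e_B: "e \<in> BB" using inB ee by auto
lemma zero_B: "0 \<in> BB" using inB by auto
lemma zero_M: "0 \<in> MM" using inM by auto
lemma add_B: "x \<in> BB \<Longrightarrow> y \<in> BB \<Longrightarrow> x + y \<in> BB" using inB by (auto simp: algebra_simps)
lemma add_M: "x \<in> MM \<Longrightarrow> y \<in> MM \<Longrightarrow> x + y \<in> MM" using inM by (auto simp: algebra_simps)
lemma mul_B: "x \<in> BB \<Longrightarrow> y \<in> BB \<Longrightarrow> x * y \<in> BB" unfolding inB by (simp add: mult.assoc[symmetric]) (simp add: mult.assoc)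
lemma lmul_M: "x \<in> MM \<Longrightarrow> a * x \<in> MM" unfolding inM by (simp add: mult.assoc)
lemma eM_B: "x \<in> MM \<Longrightarrow> e * x \<in> BB" unfolding inM inB by (simp add: mult.assoc[symmetric] ee) (simp add: mult.assoc)
lemma MB_M: "x \<in> MM \<Longrightarrow> y \<in> BB \<Longrightarrow> x * y \<in> MM" unfolding inM inB by (simp add: mult.assoc)
lemma sc_M: "x \<in> MM \<Longrightarrow> sc c x \<in> MM" unfolding inM by (metis calgD(5)[OF cs])
lemma sc_B: "x \<in> BB \<Longrightarrow> sc c x \<in> BB" unfolding inB by (metis calgD(5,6)[OF cs])

lemma lcsD:
  "\<And>i. i \<in> I \<Longrightarrow> b \<in> BB \<Longrightarrow> \<alpha> i b \<in> MM"
  "\<And>i. i \<in> I \<Longrightarrow> b \<in> BB \<Longrightarrow> b' \<in> BB \<Longrightarrow> \<alpha> i (b + b') = \<alpha> i b + \<alpha> i b'"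
  "\<And>i. i \<in> I \<Longrightarrow> b \<in> BB \<Longrightarrow> \<alpha> i (sc c b) = sc c (\<alpha> i b)"
  "\<And>i. i \<in> I \<Longrightarrow> b \<in> BB \<Longrightarrow> b' \<in> BB \<Longrightarrow> \<alpha> i (b * b') = \<alpha> i b * b'"
  "\<And>i. i \<in> I \<Longrightarrow> m \<in> MM \<Longrightarrow> ac i m \<in> BB"
  "\<And>i. i \<in> I \<Longrightarrow> m \<in> MM \<Longrightarrow> m' \<in> MM \<Longrightarrow> ac i (m + m') = ac i m + ac i m'"
  "\<And>i. i \<in> I \<Longrightarrow> m \<in> MM \<Longrightarrow> ac i (sc c m) = sc c (ac i m)"
  "\<And>i. i \<in> I \<Longrightarrow> m \<in> MM \<Longrightarrow> b \<in> BB \<Longrightarrow> ac i (m * b) = ac i m * b"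
  "\<xi> \<in> MM \<Longrightarrow> finite {i\<in>I. ac i \<xi> \<noteq> 0}"
  "\<xi> \<in> MM \<Longrightarrow> \<xi> = (\<Sum>i\<in>{i\<in>I. ac i \<xi> \<noteq> 0}. \<alpha> i (ac i \<xi>))"
  "finite {i\<in>I. \<exists>m\<in>MM. ac i (x * m) \<noteq> 0}"
proof -
  note L = lcs[unfolded left_coord_sys_def Let_def lin_on_def Ae_mod_def lmod.simps]
  note L1 = L[THEN conjunct1] and L2 = L[THEN conjunct2, THEN conjunct1]
    and L3 = L[THEN conjunct2, THEN conjunct2, THEN conjunct1]
    and L4 = L[THEN conjunct2, THEN conjunct2, THEN conjunct2]
  show "\<And>i. i \<in> I \<Longrightarrow> b \<in> BB \<Longrightarrow> \<alpha> i b \<in> MM" using L1 by blast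
  show "\<And>i. i \<in> I \<Longrightarrow> b \<in> BB \<Longrightarrow> b' \<in> BB \<Longrightarrow> \<alpha> i (b + b') = \<alpha> i b + \<alpha> i b'" using L1 by blast
  show "\<And>i. i \<in> I \<Longrightarrow> b \<in> BB \<Longrightarrow> \<alpha> i (sc c b) = sc c (\<alpha> i b)" using L1 by blast
  show "\<And>i. i \<in> I \<Longrightarrow> b \<in> BB \<Longrightarrow> b' \<in> BB \<Longrightarrow> \<alpha> i (b * b') = \<alpha> i b * b'" using L1 by blast
  show "\<And>i. i \<in> I \<Longrightarrow> m \<in> MM \<Longrightarrow> ac i m \<in> BB" using L2 by blast
  show "\<And>i. i \<in> I \<Longrightarrow> m \<in> MM \<Longrightarrow> m' \<in> MM \<Longrightarrow> ac i (m + m') = ac i m + ac i m'" using L2 by blast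
  show "\<And>i. i \<in> I \<Longrightarrow> m \<in> MM \<Longrightarrow> ac i (sc c m) = sc c (ac i m)" using L2 by blast
  show "\<And>i. i \<in> I \<Longrightarrow> m \<in> MM \<Longrightarrow> b \<in> BB \<Longrightarrow> ac i (m * b) = ac i m * b" using L2 by blast
  show "\<xi> \<in> MM \<Longrightarrow> finite {i\<in>I. ac i \<xi> \<noteq> 0}" using L3 by blast
  show "\<xi> \<in> MM \<Longrightarrow> \<xi> = (\<Sum>i\<in>{i\<in>I. ac i \<xi> \<noteq> 0}. \<alpha> i (ac i \<xi>))" using L3 by blast
  show "finite {i\<in>I. \<exists>m\<in>MM. ac i (x * m) \<noteq> 0}" using L4 by blast
qed

lemma phiD:
  "x \<in> BB \<Longrightarrow> y \<in> BB \<Longrightarrow> \<phi> (x + y) = \<phi> x + \<phi> y"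
  "x \<in> BB \<Longrightarrow> \<phi> (sc c x) = c * \<phi> x"
  "x \<in> BB \<Longrightarrow> y \<in> BB \<Longrightarrow> \<phi> (x * y) = \<phi> (y * x)"
  "x \<notin> BB \<Longrightarrow> \<phi> x = 0"
  using phi unfolding SLF_def by auto

lemma phi0: "\<phi> 0 = 0" using phiD(1)[OF zero_B zero_B] by simp
lemma al0: "i \<in> I \<Longrightarrow> \<alpha> i 0 = 0" using lcsD(2)[OF _ zero_B zero_B] by simp
lemma ac0: "i \<in> I \<Longrightarrow> ac i 0 = 0" using lcsD(6)[OF _ zero_M zero_M] by simp

lemma al_e: "i \<in> I \<Longrightarrow> b \<in> BB \<Longrightarrow> \<alpha> i b = \<alpha> i e * b"
  using lcsD(4)[OF _ e_B, of i b] inB by simp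

lemma decomp_U:
  assumes "\<xi> \<in> MM" "finite U" "{i\<in>I. ac i \<xi> \<noteq> 0} \<subseteq> U" "U \<subseteq> I"
  shows "\<xi> = (\<Sum>i\<in>U. \<alpha> i (ac i \<xi>))"
proof -
  have "\<xi> = (\<Sum>i\<in>{i\<in>I. ac i \<xi> \<noteq> 0}. \<alpha> i (ac i \<xi>))" using lcsD(10)[OF assms(1)] .
  also have "\<dots> = (\<Sum>i\<in>U. \<alpha> i (ac i \<xi>))"
    by (rule sum.mono_neutral_left) (use assms al0 in auto)
  finally show ?thesis .
qed

definition "TT x = {i\<in>I. \<exists>m\<in>MM. ac i (x * m) \<noteq> 0}"

lemma TT_fin: "finite (TT x)" unfolding TT_def using lcsD(11) .
lemma TT_I: "TT x \<subseteq> I" unfolding TT_def by auto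

lemma tr_eq:
  assumes "finite U" "TT x \<subseteq> U" "U \<subseteq> I"
  shows "pseudotrace I \<alpha> ac e \<phi> x = (\<Sum>i\<in>U. \<phi> (ac i (x * \<alpha> i e)))"
  unfolding pseudotrace_def
proof (rule sum.mono_neutral_left)
  show "finite U" by fact
  show "{i \<in> I. \<phi> (ac i (x * \<alpha> i e)) \<noteq> 0} \<subseteq> U"
  proof
    fix i assume i: "i \<in> {i \<in> I. \<phi> (ac i (x * \<alpha> i e)) \<noteq> 0}"
    then have "ac i (x * \<alpha> i e) \<noteq> 0" using phi0 by auto
    moreover have "\<alpha> i e \<in> MM" using lcsD(1) i e_B by auto
    ultimately have "i \<in> TT x" using i unfolding TT_def by blast
    then show "i \<in> U" using assms by auto
  qed
  show "\<forall>i\<in>U - {i \<in> I. \<phi> (ac i (x * \<alpha> i e)) \<noteq> 0}. \<phi> (ac i (x * \<alpha> i e)) = 0"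
    using assms by auto
qed


lemma alM: "i \<in> I \<Longrightarrow> \<alpha> i e \<in> MM" using lcsD(1) e_B by auto

lemma tr_add: "pseudotrace I \<alpha> ac e \<phi> (x + y) = pseudotrace I \<alpha> ac e \<phi> x + pseudotrace I \<alpha> ac e \<phi> y"
proof -
  define U where "U = TT x \<union> TT y \<union> TT (x + y)"
  have U: "finite U" "U \<subseteq> I" unfolding U_def using TT_fin TT_I by auto
  have "pseudotrace I \<alpha> ac e \<phi> (x + y) = (\<Sum>i\<in>U. \<phi> (ac i ((x + y) * \<alpha> i e)))"
    by (rule tr_eq) (use U U_def in auto)
  also have "\<dots> = (\<Sum>i\<in>U. \<phi> (ac i (x * \<alpha> i e)) + \<phi> (ac i (y * \<alpha> i e)))"
  proof (rule sum.cong)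
    fix i assume i: "i \<in> U"
    then have i': "i \<in> I" using U by auto
    have "ac i ((x + y) * \<alpha> i e) = ac i (x * \<alpha> i e) + ac i (y * \<alpha> i e)"
      using lcsD(6)[OF i' lmul_M[OF alM[OF i']] lmul_M[OF alM[OF i']]] by (simp add: distrib_right)
    then show "\<phi> (ac i ((x + y) * \<alpha> i e)) = \<phi> (ac i (x * \<alpha> i e)) + \<phi> (ac i (y * \<alpha> i e))"
      using phiD(1)[OF lcsD(5)[OF i' lmul_M[OF alM[OF i']]] lcsD(5)[OF i' lmul_M[OF alM[OF i']]]] by simp
  qed simp
  also have "\<dots> = pseudotrace I \<alpha> ac e \<phi> x + pseudotrace I \<alpha> ac e \<phi> y"
    by (simp add: sum.distrib, rule arg_cong2[where f="(+)"]; rule tr_eq[symmetric]) (use U U_def in auto)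
  finally show ?thesis .
qed

lemma tr_sc: "pseudotrace I \<alpha> ac e \<phi> (sc c x) = c * pseudotrace I \<alpha> ac e \<phi> x"
proof -
  define U where "U = TT x \<union> TT (sc c x)"
  have U: "finite U" "U \<subseteq> I" unfolding U_def using TT_fin TT_I by auto
  have "pseudotrace I \<alpha> ac e \<phi> (sc c x) = (\<Sum>i\<in>U. \<phi> (ac i (sc c x * \<alpha> i e)))"
    by (rule tr_eq) (use U U_def in auto)
  also have "\<dots> = (\<Sum>i\<in>U. c * \<phi> (ac i (x * \<alpha> i e)))"
  proof (rule sum.cong)
    fix i assume i: "i \<in> U"
    then have i': "i \<in> I" using U by auto
    have "ac i (sc c x * \<alpha> i e) = sc c (ac i (x * \<alpha> i e))"
      using lcsD(7)[OF i' lmul_M[OF alM[OF i']]] calgD(5)[OF cs] by metis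
    then show "\<phi> (ac i (sc c x * \<alpha> i e)) = c * \<phi> (ac i (x * \<alpha> i e))"
      using phiD(2)[OF lcsD(5)[OF i' lmul_M[OF alM[OF i']]]] by simp
  qed simp
  also have "\<dots> = c * pseudotrace I \<alpha> ac e \<phi> x"
  proof -
    have "pseudotrace I \<alpha> ac e \<phi> x = (\<Sum>i\<in>U. \<phi> (ac i (x * \<alpha> i e)))"
      by (rule tr_eq) (use U U_def in auto)
    then show ?thesis by (simp add: sum_distrib_left)
  qed
  finally show ?thesis .
qed

lemma expand:
  assumes i: "i \<in> I" and U: "finite U" "TT y \<subseteq> U" "U \<subseteq> I"
  shows "\<phi> (ac i (x * y * \<alpha> i e)) = (\<Sum>j\<in>U. \<phi> (ac i (x * \<alpha> j e) * ac j (y * \<alpha> i e)))"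
proof -
  define m where "m = y * \<alpha> i e"
  have mM: "m \<in> MM" unfolding m_def using lmul_M alM i by auto
  have "{j\<in>I. ac j m \<noteq> 0} \<subseteq> TT y" unfolding TT_def m_def using alM[OF i] by blast
  then have md: "m = (\<Sum>j\<in>U. \<alpha> j (ac j m))" using decomp_U[OF mM U(1)] U by auto
  have cB: "\<And>j. j \<in> U \<Longrightarrow> ac j m \<in> BB" using lcsD(5) mM U by auto
  have "x * y * \<alpha> i e = x * m" unfolding m_def by (simp add: mult.assoc)
  also have "\<dots> = (\<Sum>j\<in>U. x * \<alpha> j (ac j m))" by (subst md) (simp add: sum_distrib_left)
  also have "\<dots> = (\<Sum>j\<in>U. (x * \<alpha> j e) * ac j m)"
    by (rule sum.cong) (use al_e cB U in \<open>auto simp: mult.assoc\<close>)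
  finally have xym: "x * y * \<alpha> i e = (\<Sum>j\<in>U. (x * \<alpha> j e) * ac j m)" .
  have tM: "\<And>j. j \<in> U \<Longrightarrow> (x * \<alpha> j e) * ac j m \<in> MM"
    using MB_M lmul_M alM cB U by auto
  have "ac i (x * y * \<alpha> i e) = (\<Sum>j\<in>U. ac i ((x * \<alpha> j e) * ac j m))"
    unfolding xym
    by (rule additive_sum(1)[where S=MM]) (use lcsD(6)[OF i] zero_M add_M U tM in auto)
  also have "\<dots> = (\<Sum>j\<in>U. ac i (x * \<alpha> j e) * ac j m)"
    by (rule sum.cong) (use lcsD(8)[OF i] lmul_M alM cB U in auto)
  finally have A: "ac i (x * y * \<alpha> i e) = (\<Sum>j\<in>U. ac i (x * \<alpha> j e) * ac j m)" .
  have tB: "\<And>j. j \<in> U \<Longrightarrow> ac i (x * \<alpha> j e) * ac j m \<in> BB"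
    using mul_B lcsD(5)[OF i] lmul_M alM cB U by auto
  show ?thesis unfolding A
    by (subst additive_sum(1)[where S=BB]) (use phiD(1) zero_B add_B U tB m_def in auto)
qed

lemma tr_sym: "pseudotrace I \<alpha> ac e \<phi> (x * y) = pseudotrace I \<alpha> ac e \<phi> (y * x)"
proof -
  define U where "U = TT x \<union> TT y \<union> TT (x * y) \<union> TT (y * x)"
  have U: "finite U" "U \<subseteq> I" unfolding U_def using TT_fin TT_I by auto
  have "pseudotrace I \<alpha> ac e \<phi> (x * y) = (\<Sum>i\<in>U. \<phi> (ac i (x * y * \<alpha> i e)))"
    by (rule tr_eq) (use U U_def in auto)
  also have "\<dots> = (\<Sum>i\<in>U. \<Sum>j\<in>U. \<phi> (ac i (x * \<alpha> j e) * ac j (y * \<alpha> i e)))"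
  proof (rule sum.cong)
    fix i assume "i \<in> U"
    then show "\<phi> (ac i (x * y * \<alpha> i e)) = (\<Sum>j\<in>U. \<phi> (ac i (x * \<alpha> j e) * ac j (y * \<alpha> i e)))"
      by (intro expand) (use U U_def in auto)
  qed simp
  also have "\<dots> = (\<Sum>j\<in>U. \<Sum>i\<in>U. \<phi> (ac j (y * \<alpha> i e) * ac i (x * \<alpha> j e)))"
    apply (subst sum.swap)
    apply (rule sum.cong, simp, rule sum.cong, simp)
    using phiD(3) lcsD(5) lmul_M alM U by (metis subsetD)
  also have "\<dots> = (\<Sum>j\<in>U. \<phi> (ac j (y * x * \<alpha> j e)))"
  proof (rule sum.cong)
    fix j assume "j \<in> U"
    then show "(\<Sum>i\<in>U. \<phi> (ac j (y * \<alpha> i e) * ac i (x * \<alpha> j e))) = \<phi> (ac j (y * x * \<alpha> j e))"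
      by (intro expand[symmetric]) (use U U_def in auto)
  qed simp
  also have "\<dots> = pseudotrace I \<alpha> ac e \<phi> (y * x)"
    by (rule tr_eq[symmetric]) (use U U_def in auto)
  finally show ?thesis .
qed

lemma tr_SLF: "pseudotrace I \<alpha> ac e \<phi> \<in> SLF sc UNIV"
  unfolding SLF_def using tr_add tr_sc tr_sym by auto

lemma tr_restr_pt: "x \<in> BB \<Longrightarrow> pseudotrace I \<alpha> ac e \<phi> x = \<phi> x"
proof -
  assume xB: "x \<in> BB"
  have xM: "x \<in> MM" using B_M xB .
  define U where "U = TT x \<union> {i\<in>I. ac i x \<noteq> 0}"
  have U: "finite U" "U \<subseteq> I" unfolding U_def using TT_fin TT_I lcsD(9)[OF xM] by auto
  have "pseudotrace I \<alpha> ac e \<phi> x = (\<Sum>i\<in>U. \<phi> (ac i (x * \<alpha> i e)))"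
    by (rule tr_eq) (use U U_def in auto)
  also have "\<dots> = (\<Sum>i\<in>U. \<phi> (e * \<alpha> i (ac i x)))"
  proof (rule sum.cong)
    fix i assume "i \<in> U"
    then have i: "i \<in> I" using U by auto
    have eaB: "e * \<alpha> i e \<in> BB" using eM_B alM i by auto
    have acB: "ac i x \<in> BB" using lcsD(5) i xM by auto
    have "x * \<alpha> i e = x * (e * \<alpha> i e)" using inM xM by (metis mult.assoc)
    then have "ac i (x * \<alpha> i e) = ac i x * (e * \<alpha> i e)" using lcsD(8)[OF i xM eaB] by simp
    then have "\<phi> (ac i (x * \<alpha> i e)) = \<phi> ((e * \<alpha> i e) * ac i x)" using phiD(3)[OF acB eaB] by simp
    also have "(e * \<alpha> i e) * ac i x = e * \<alpha> i (ac i x)" using al_e[OF i acB] by (simp add: mult.assoc)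
    finally show "\<phi> (ac i (x * \<alpha> i e)) = \<phi> (e * \<alpha> i (ac i x))" .
  qed simp
  also have "\<dots> = \<phi> (\<Sum>i\<in>U. e * \<alpha> i (ac i x))"
  proof (rule additive_sum(1)[symmetric, where S=BB])
    show "\<forall>j\<in>U. e * \<alpha> j (ac j x) \<in> BB"
    proof
      fix j assume "j \<in> U"
      then have j: "j \<in> I" using U by auto
      show "e * \<alpha> j (ac j x) \<in> BB" using eM_B lcsD(1)[OF j lcsD(5)[OF j xM]] by blast
    qed
  qed (use phiD(1) zero_B add_B U in auto)
  also have "(\<Sum>i\<in>U. e * \<alpha> i (ac i x)) = e * x"
  proof -
    have d: "x = (\<Sum>i\<in>U. \<alpha> i (ac i x))" using decomp_U[OF xM U(1) _ U(2)] U_def by blast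
    have "e * x = e * (\<Sum>i\<in>U. \<alpha> i (ac i x))" using d by (rule arg_cong)
    then show ?thesis by (simp add: sum_distrib_left)
  qed
  also have "e * x = x" using inB xB by auto
  finally show ?thesis .
qed

lemma tr_restr: "restr e (pseudotrace I \<alpha> ac e \<phi>) = \<phi>"
  unfolding restr_def using tr_restr_pt phiD(4) by auto

end

definition AeA :: "'a::ring \<Rightarrow> 'a set" where
  "AeA e = {x. \<exists>xs. x = sum_list (map (\<lambda>p. fst p * e * snd p) xs)}"

lemma AeA_0: "0 \<in> AeA e" unfolding AeA_def by (auto intro: exI[of _ "[]"])

lemma AeA_gen: "a * e * b \<in> AeA e" unfolding AeA_def by (auto intro!: exI[of _ "[(a,b)]"])

lemma AeA_add: "x \<in> AeA e \<Longrightarrow> y \<in> AeA e \<Longrightarrow> x + y \<in> AeA e"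
proof -
  assume "x \<in> AeA e" "y \<in> AeA e"
  then obtain xs ys where "x = sum_list (map (\<lambda>p. fst p * e * snd p) xs)"
    "y = sum_list (map (\<lambda>p. fst p * e * snd p) ys)" unfolding AeA_def by auto
  then have "x + y = sum_list (map (\<lambda>p. fst p * e * snd p) (xs @ ys))" by simp
  then show ?thesis unfolding AeA_def by blast
qed

lemma AeA_lmul: "x \<in> AeA e \<Longrightarrow> c * x \<in> AeA e"
proof -
  assume "x \<in> AeA e"
  then obtain xs where x: "x = sum_list (map (\<lambda>p. fst p * e * snd p) xs)" unfolding AeA_def by auto
  have "c * sum_list (map (\<lambda>p. fst p * e * snd p) xs)
     = sum_list (map (\<lambda>p. fst p * e * snd p) (map (\<lambda>p. (c * fst p, snd p)) xs))"
    by (induction xs) (auto simp: distrib_left mult.assoc)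
  then show ?thesis unfolding AeA_def x by blast
qed

lemma AeA_rmul: "x \<in> AeA e \<Longrightarrow> x * c \<in> AeA e"
proof -
  assume "x \<in> AeA e"
  then obtain xs where x: "x = sum_list (map (\<lambda>p. fst p * e * snd p) xs)" unfolding AeA_def by auto
  have "sum_list (map (\<lambda>p. fst p * e * snd p) xs) * c
     = sum_list (map (\<lambda>p. fst p * e * snd p) (map (\<lambda>p. (fst p, snd p * c)) xs))"
    by (induction xs) (auto simp: distrib_right mult.assoc)
  then show ?thesis unfolding AeA_def x by blast
qed

lemma AeA_sc: "calg sc \<Longrightarrow> x \<in> AeA e \<Longrightarrow> sc c x \<in> AeA e"
proof -
  assume cs: "calg sc" and "x \<in> AeA e"
  then obtain xs where x: "x = sum_list (map (\<lambda>p. fst p * e * snd p) xs)" unfolding AeA_def by auto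
  have "sc c (sum_list (map (\<lambda>p. fst p * e * snd p) xs))
     = sum_list (map (\<lambda>p. fst p * e * snd p) (map (\<lambda>p. (sc c (fst p), snd p)) xs))"
    by (induction xs) (auto simp: calgD(1,5)[OF cs] calg_zero[OF cs] mult.assoc[symmetric])
  then show ?thesis unfolding AeA_def x by blast
qed

context
  fixes sc :: "complex \<Rightarrow> 'a::ring \<Rightarrow> 'a" and E :: "'a set"
  assumes cs: "calg sc"
    and Eid: "\<forall>e\<in>E. idem e"
    and Eorth: "\<forall>e\<in>E. \<forall>f\<in>E. e \<noteq> f \<longrightarrow> e * f = 0"
    and Edec: "\<forall>x. \<exists>F g. finite F \<and> F \<subseteq> E \<times> E \<and>
            (\<forall>p\<in>F. g p \<in> corner2 (fst p) (snd p)) \<and> x = (\<Sum>p\<in>F. g p)"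
begin

lemma sumE_mult:
  assumes "finite P" "P \<subseteq> E" "p0 \<in> P"
  shows "(\<Sum>p\<in>P. p) * p0 = p0"
proof -
  have "(\<Sum>p\<in>P. p) * p0 = (\<Sum>p\<in>P. p * p0)" by (simp add: sum_distrib_right)
  also have "\<dots> = p0 * p0 + (\<Sum>p\<in>P - {p0}. p * p0)" using assms by (simp add: sum.remove)
  also have "(\<Sum>p\<in>P - {p0}. p * p0) = 0"
  proof (rule sum.neutral, rule ballI)
    fix p assume "p \<in> P - {p0}"
    then have "p \<in> E" "p0 \<in> E" "p \<noteq> p0" using assms by auto
    then show "p * p0 = 0" using Eorth by blast
  qed
  also have "p0 * p0 = p0" using assms Eid unfolding idem_def by blast
  finally show ?thesis by simp
qed

lemma fin_left: "finite {p\<in>E. p * x \<noteq> 0}"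
proof -
  obtain F g where F: "finite F" "F \<subseteq> E \<times> E" "\<forall>p\<in>F. g p \<in> corner2 (fst p) (snd p)"
    "x = (\<Sum>p\<in>F. g p)" using Edec[THEN spec[of _ x]] by (elim exE conjE) (rule that)
  have "{p\<in>E. p * x \<noteq> 0} \<subseteq> fst ` F"
  proof (rule ccontr)
    assume "\<not> ?thesis"
    then obtain p where p: "p \<in> E" "p * x \<noteq> 0" "p \<notin> fst ` F" by auto
    have "p * x = (\<Sum>q\<in>F. p * g q)" using F(4) by (simp add: sum_distrib_left)
    also have "\<dots> = 0"
    proof (rule sum.neutral, rule ballI)
      fix q assume q: "q \<in> F"
      then obtain a where "g q = fst q * a * snd q" using F(3) unfolding corner2_def by blast
      moreover have "p * fst q = 0"
      proof -
        have "fst q \<in> E" using q F(2) by auto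
        moreover have "p \<noteq> fst q" using p(3) q by force
        ultimately show ?thesis using Eorth p(1) by simp
      qed
      ultimately show "p * g q = 0" by (simp add: mult.assoc[symmetric])
    qed
    finally show False using p by simp
  qed
  then show ?thesis using F(1) finite_subset by blast
qed

lemma fin_right: "finite {p\<in>E. x * p \<noteq> 0}"
proof -
  obtain F g where F: "finite F" "F \<subseteq> E \<times> E" "\<forall>p\<in>F. g p \<in> corner2 (fst p) (snd p)"
    "x = (\<Sum>p\<in>F. g p)" using Edec[THEN spec[of _ x]] by (elim exE conjE) (rule that)
  have "{p\<in>E. x * p \<noteq> 0} \<subseteq> snd ` F"
  proof (rule ccontr)
    assume "\<not> ?thesis"
    then obtain p where p: "p \<in> E" "x * p \<noteq> 0" "p \<notin> snd ` F" by auto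
    have "x * p = (\<Sum>q\<in>F. g q * p)" using F(4) by (simp add: sum_distrib_right)
    also have "\<dots> = 0"
    proof (rule sum.neutral, rule ballI)
      fix q assume q: "q \<in> F"
      then obtain a where "g q = fst q * a * snd q" using F(3) unfolding corner2_def by blast
      moreover have "snd q * p = 0"
      proof -
        have "snd q \<in> E" using q F(2) by auto
        moreover have "snd q \<noteq> p" using p(3) q by force
        ultimately show ?thesis using Eorth p(1) by simp
      qed
      ultimately show "g q * p = 0" by (simp add: mult.assoc)
    qed
    finally show False using p by simp
  qed
  then show ?thesis using F(1) finite_subset by blast
qed

lemma unit_sum:
  assumes P: "finite P" "P \<subseteq> E" "{p\<in>E. p * x \<noteq> 0} \<subseteq> P"
  shows "(\<Sum>p\<in>P. p * x) = x"
proof -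
  obtain F g where F: "finite F" "F \<subseteq> E \<times> E" "\<forall>p\<in>F. g p \<in> corner2 (fst p) (snd p)"
    "x = (\<Sum>p\<in>F. g p)" using Edec[THEN spec[of _ x]] by (elim exE conjE) (rule that)
  define Q where "Q = P \<union> fst ` F"
  have Q: "finite Q" "Q \<subseteq> E" "P \<subseteq> Q" "fst ` F \<subseteq> Q" unfolding Q_def using P F by auto
  have "(\<Sum>p\<in>P. p * x) = (\<Sum>p\<in>Q. p * x)"
  proof (rule sum.mono_neutral_left)
    show "\<forall>i\<in>Q - P. i * x = 0" using Q P by blast
  qed (use Q in auto)
  also have "\<dots> = (\<Sum>p\<in>Q. p) * x" by (simp add: sum_distrib_right)
  also have "\<dots> = (\<Sum>q\<in>F. (\<Sum>p\<in>Q. p) * g q)" using F(4) by (simp add: sum_distrib_left)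
  also have "\<dots> = (\<Sum>q\<in>F. g q)"
  proof (rule sum.cong)
    fix q assume q: "q \<in> F"
    then obtain a where g: "g q = fst q * a * snd q" using F(3) unfolding corner2_def by blast
    have "fst q \<in> Q" using Q(4) q by blast
    then have "(\<Sum>p\<in>Q. p) * fst q = fst q" using sumE_mult Q(1,2) by blast
    then show "(\<Sum>p\<in>Q. p) * g q = g q" unfolding g by (simp add: mult.assoc[symmetric])
  qed simp
  finally show ?thesis using F(4) by simp
qed

lemma local_unit: "\<exists>u. u * x = (x::'a)"
proof -
  have "(\<Sum>p\<in>{p\<in>E. p * x \<noteq> 0}. p * x) = x" by (rule unit_sum) (use fin_left in auto)
  then have "(\<Sum>p\<in>{p\<in>E. p * x \<noteq> 0}. p) * x = x" by (simp add: sum_distrib_right)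
  then show ?thesis by (rule exI)
qed

end

lemma gen_AeA:
  fixes sc :: "complex \<Rightarrow> 'a::ring \<Rightarrow> 'a" and e p :: 'a
  assumes cs: "calg sc" and lu: "\<forall>x::'a. \<exists>u. u * x = x" and gen: "generating_idem sc e"
    and pp: "p * p = p"
  shows "p \<in> AeA e"
proof (rule ccontr)
  assume npA: "p \<notin> AeA e"
  have ee: "e * e = e" using gen unfolding generating_idem_def idem_def by auto
  define V where "V = {x. x * p = x}"
  have V0: "0 \<in> V" and Vadd: "\<And>x y. x \<in> V \<Longrightarrow> y \<in> V \<Longrightarrow> x + y \<in> V"
    and Vsc: "\<And>c x. x \<in> V \<Longrightarrow> sc c x \<in> V" and Vmul: "\<And>a x. x \<in> V \<Longrightarrow> a * x \<in> V"
    and Vneg: "\<And>x. x \<in> V \<Longrightarrow> - x \<in> V" and pV: "p \<in> V"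
    unfolding V_def using pp by (auto simp: distrib_right mult.assoc calgD(5)[OF cs, symmetric])
  define lsub where "lsub N \<longleftrightarrow> N \<subseteq> V \<and> 0 \<in> N \<and> (\<forall>x\<in>N. \<forall>y\<in>N. x + y \<in> N) \<and>
     (\<forall>c. \<forall>x\<in>N. sc c x \<in> N) \<and> (\<forall>a. \<forall>x\<in>N. a * x \<in> N) \<and> (\<forall>x\<in>V. e * x \<in> N) \<and> p \<notin> N"
    for N
  define Fam where "Fam = {N. lsub N}"
  define N0 where "N0 = {x\<in>AeA e. x * p = x}"
  have N0F: "N0 \<in> Fam"
  proof -
    have a: "N0 \<subseteq> V" unfolding V_def N0_def by auto
    have b: "0 \<in> N0" unfolding N0_def using AeA_0 by auto
    have c: "\<forall>x\<in>N0. \<forall>y\<in>N0. x + y \<in> N0" unfolding N0_def using AeA_add by (auto simp: distrib_right)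
    have d: "\<forall>c. \<forall>x\<in>N0. sc c x \<in> N0" unfolding N0_def
      using AeA_sc[OF cs] by (auto simp: calgD(5)[OF cs, symmetric])
    have f: "\<forall>a. \<forall>x\<in>N0. a * x \<in> N0" unfolding N0_def using AeA_lmul by (auto simp: mult.assoc)
    have g: "\<forall>x\<in>V. e * x \<in> N0"
    proof
      fix x assume "x \<in> V"
      moreover have "e * e * x \<in> AeA e" by (rule AeA_gen)
      ultimately show "e * x \<in> N0" using ee unfolding V_def N0_def by (auto simp: mult.assoc)
    qed
    have h: "p \<notin> N0" using npA unfolding N0_def by auto
    show ?thesis unfolding Fam_def lsub_def using a b c d f g h by blast
  qed
  have "\<exists>N\<in>Fam. \<forall>X\<in>Fam. N \<subseteq> X \<longrightarrow> X = N"
  proof (rule Zorn_Lemma2, rule ballI)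
    fix C assume C: "C \<in> chains Fam"
    show "\<exists>U\<in>Fam. \<forall>X\<in>C. X \<subseteq> U"
    proof (cases "C = {}")
      case True then show ?thesis using N0F by blast
    next
      case False
      have CF: "C \<subseteq> Fam" and ch: "\<And>X Y. X \<in> C \<Longrightarrow> Y \<in> C \<Longrightarrow> X \<subseteq> Y \<or> Y \<subseteq> X"
        using C unfolding chains_def chain_subset_def by auto
      have ls: "\<And>X. X \<in> C \<Longrightarrow> lsub X" using CF unfolding Fam_def by auto
      obtain X0 where X0: "X0 \<in> C" using False by auto
      have "lsub (\<Union>C)"
        unfolding lsub_def
      proof (intro conjI ballI allI)
        show "\<Union>C \<subseteq> V" using ls unfolding lsub_def by blast
        show "0 \<in> \<Union>C" using ls[OF X0] X0 unfolding lsub_def by blast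
        show "x + y \<in> \<Union>C" if xy: "x \<in> \<Union>C" "y \<in> \<Union>C" for x y
        proof -
          obtain X Y where XY: "X \<in> C" "Y \<in> C" "x \<in> X" "y \<in> Y" using xy by auto
          show ?thesis
          proof (cases "X \<subseteq> Y")
            case True then show ?thesis using ls[OF XY(2)] XY unfolding lsub_def by blast
          next
            case False then have "Y \<subseteq> X" using ch XY by blast
            then show ?thesis using ls[OF XY(1)] XY unfolding lsub_def by blast
          qed
        qed
        show "sc c x \<in> \<Union>C" if "x \<in> \<Union>C" for c x using that ls unfolding lsub_def by blast
        show "a * x \<in> \<Union>C" if "x \<in> \<Union>C" for a x using that ls unfolding lsub_def by blast
        show "e * x \<in> \<Union>C" if "x \<in> V" for x using that ls[OF X0] X0 unfolding lsub_def by blast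
        show "p \<notin> \<Union>C" using ls unfolding lsub_def by blast
      qed
      then show ?thesis unfolding Fam_def by blast
    qed
  qed
  then obtain N where NF: "N \<in> Fam" and Nmax: "\<forall>X\<in>Fam. N \<subseteq> X \<longrightarrow> X = N" by blast
  have NV: "N \<subseteq> V" and N0: "0 \<in> N" and Nadd: "\<And>x y. x \<in> N \<Longrightarrow> y \<in> N \<Longrightarrow> x + y \<in> N"
    and Nsc: "\<And>c x. x \<in> N \<Longrightarrow> sc c x \<in> N" and Nmul: "\<And>a x. x \<in> N \<Longrightarrow> a * x \<in> N"
    and Ne: "\<And>x. x \<in> V \<Longrightarrow> e * x \<in> N" and pN: "p \<notin> N"
    using NF unfolding Fam_def lsub_def by auto
  have Nneg: "\<And>x. x \<in> N \<Longrightarrow> - x \<in> N" using Nsc calg_neg[OF cs] by metis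
  have Ndiff: "\<And>x y. x \<in> N \<Longrightarrow> y \<in> N \<Longrightarrow> x - y \<in> N"
    using Nadd Nneg by (metis diff_conv_add_uminus)
  define q where "q x = {y. y - x \<in> N}" for x
  have q_eq: "q x = q y \<longleftrightarrow> x - y \<in> N" for x y
  proof
    assume "q x = q y"
    moreover have "x \<in> q x" unfolding q_def using N0 by simp
    ultimately show "x - y \<in> N" unfolding q_def by auto
  next
    assume xy: "x - y \<in> N"
    show "q x = q y" unfolding q_def
    proof (intro Collect_cong iffI)
      fix z assume "z - x \<in> N"
      then have "(z - x) + (x - y) \<in> N" using Nadd xy by blast
      then show "z - y \<in> N" by simp
    next
      fix z assume "z - y \<in> N"
      then have "(z - y) - (x - y) \<in> N" using Ndiff xy by blast
      then show "z - x \<in> N" by simp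
    qed
  qed
  define rep where "rep X = (SOME x. x \<in> X)" for X :: "'a set"
  have rep_q: "rep (q x) - x \<in> N" for x
  proof -
    have "x \<in> q x" unfolding q_def using N0 by simp
    then have "rep (q x) \<in> q x" unfolding rep_def by (rule someI)
    then show ?thesis unfolding q_def by simp
  qed
  define Mod :: "('a, 'a set) lmod" where "Mod = \<lparr>carr = q ` V, madd = (\<lambda>X Y. q (rep X + rep Y)),
     mzero = q 0, mscal = (\<lambda>c X. q (sc c (rep X))), mact = (\<lambda>a X. q (a * rep X))\<rparr>"
  have carrM: "carr Mod = q ` V" and zeroM: "mzero Mod = q 0" unfolding Mod_def by simp_all
  have madd_q: "madd Mod (q x) (q y) = q (x + y)" for x y
  proof -
    have "(rep (q x) - x) + (rep (q y) - y) \<in> N" using Nadd rep_q by blast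
    then show ?thesis unfolding Mod_def using q_eq by (simp add: algebra_simps)
  qed
  have mscal_q: "mscal Mod c (q x) = q (sc c x)" for c x
  proof -
    have "sc c (rep (q x) - x) \<in> N" using Nsc rep_q by blast
    then show ?thesis unfolding Mod_def using q_eq calg_diff[OF cs] by simp
  qed
  have mact_q: "mact Mod a (q x) = q (a * x)" for a x
  proof -
    have "a * (rep (q x) - x) \<in> N" using Nmul rep_q by blast
    then show ?thesis unfolding Mod_def using q_eq by (simp add: right_diff_distrib)
  qed
  have qV: "x \<in> V \<Longrightarrow> q x \<in> q ` V" for x by blast
  have inv: "\<And>x. x \<in> V \<Longrightarrow> \<exists>y\<in>V. q (x + y) = q 0"
  proof -
    fix x assume "x \<in> V"
    then have "- x \<in> V" "q (x + - x) = q 0" using Vneg by auto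
    then show "\<exists>y\<in>V. q (x + y) = q 0" by blast
  qed
  have LM: "left_module sc Mod"
    unfolding left_module_def carrM zeroM
    apply (intro conjI)
    using V0 Vadd Vsc Vmul inv
    apply (auto simp: madd_q mscal_q mact_q calgD(1,2,3,4)[OF cs] calgD(5,6)[OF cs, symmetric]
        algebra_simps)
    done
  have QC: "quasicoherent Mod"
    unfolding quasicoherent_def carrM
  proof
    fix X assume "X \<in> q ` V"
    then obtain x where X: "X = q x" by blast
    obtain u where "u * x = x" using spec[OF lu, of x] by (elim exE)
    then have "X = mact Mod u X" unfolding X mact_q by simp
    then show "\<exists>a. X = mact Mod a X" by blast
  qed
  have qp: "q p \<noteq> q 0" using q_eq pN by simp
  have IR: "irreducible_mod Mod"
    unfolding irreducible_mod_def
  proof (intro conjI allI impI)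
    show "carr Mod \<noteq> {mzero Mod}" unfolding carrM zeroM using pV qp by blast
    fix S assume S: "submodule Mod S"
    have SC: "S \<subseteq> q ` V" and S0: "q 0 \<in> S" and Sadd: "\<And>X Y. X \<in> S \<Longrightarrow> Y \<in> S \<Longrightarrow> madd Mod X Y \<in> S"
      and Ssc: "\<And>c X. X \<in> S \<Longrightarrow> mscal Mod c X \<in> S" and Smul: "\<And>a X. X \<in> S \<Longrightarrow> mact Mod a X \<in> S"
      using S unfolding submodule_def carrM zeroM by auto
    show "S = {mzero Mod} \<or> S = carr Mod"
    proof (cases "S = {mzero Mod}")
      case True then show ?thesis by blast
    next
      case False
      then obtain X where XS: "X \<in> S" "X \<noteq> q 0" using S0 unfolding zeroM by blast
      then obtain x0 where x0: "x0 \<in> V" "X = q x0" using SC by blast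
      have x0N: "x0 \<notin> N" using XS x0 q_eq by auto
      define N' where "N' = {x\<in>V. q x \<in> S}"
      have NN': "N \<subseteq> N'"
      proof
        fix x assume xN: "x \<in> N"
        then have "q x = q 0" using q_eq by simp
        then show "x \<in> N'" unfolding N'_def using NV xN S0 by auto
      qed
      have pN': "p \<in> N'"
      proof (rule ccontr)
        assume pn: "p \<notin> N'"
        have "lsub N'" unfolding lsub_def
        proof (intro conjI ballI allI)
          show "N' \<subseteq> V" unfolding N'_def by auto
          show "0 \<in> N'" unfolding N'_def using V0 S0 by auto
          show "x + y \<in> N'" if "x \<in> N'" "y \<in> N'" for x y
            using that Vadd Sadd[of "q x" "q y"] madd_q unfolding N'_def by auto
          show "sc c x \<in> N'" if "x \<in> N'" for c x
            using that Vsc Ssc[of "q x" c] mscal_q unfolding N'_def by auto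
          show "a * x \<in> N'" if "x \<in> N'" for a x
            using that Vmul Smul[of "q x" a] mact_q unfolding N'_def by auto
          show "e * x \<in> N'" if "x \<in> V" for x
            using that Ne NN' by auto
          show "p \<notin> N'" by fact
        qed
        then have "N' = N" using Nmax NN' unfolding Fam_def by blast
        moreover have "x0 \<in> N'" unfolding N'_def using x0 XS by auto
        ultimately show False using x0N by simp
      qed
      then have qpS: "q p \<in> S" unfolding N'_def by auto
      have "q ` V \<subseteq> S"
      proof
        fix Y assume "Y \<in> q ` V"
        then obtain y where y: "y \<in> V" "Y = q y" by blast
        have "Y = mact Mod y (q p)" using y unfolding mact_q V_def by simp
        then show "Y \<in> S" using Smul qpS by simp
      qed
      then have "S = carr Mod" using SC carrM by auto
      then show ?thesis by blast
    qed
  qed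
  obtain f where f: "module_hom (Ae_mod sc e) Mod f" "f ` carr (Ae_mod sc e) = carr Mod"
    using gen LM QC IR unfolding generating_idem_def by blast
  have carrA: "carr (Ae_mod sc e) = {a * e | a. True}" and mactA: "\<And>a x. mact (Ae_mod sc e) a x = a * x"
    unfolding Ae_mod_def by simp_all
  have eA: "e \<in> carr (Ae_mod sc e)" unfolding carrA using ee by (metis (mono_tags, lifting) mem_Collect_eq)
  have fimg: "f e \<in> carr Mod" using f(1) eA unfolding module_hom_def by blast
  then obtain z where z: "z \<in> V" "f e = q z" unfolding carrM by blast
  have fmact: "\<And>a x. x \<in> carr (Ae_mod sc e) \<Longrightarrow> f (a * x) = mact Mod a (f x)"
    using f(1) unfolding module_hom_def mactA by blast
  have "f e = f (e * e)" using ee by simp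
  also have "\<dots> = q (e * z)" using fmact[OF eA, of e] z mact_q by simp
  also have "\<dots> = q 0" using q_eq Ne z by simp
  finally have fe: "f e = q 0" .
  have "carr Mod \<subseteq> {q 0}"
  proof
    fix Y assume "Y \<in> carr Mod"
    then obtain x where "x \<in> carr (Ae_mod sc e)" "Y = f x" using f(2) by blast
    then obtain a where "Y = f (a * e)" unfolding carrA by blast
    also have "\<dots> = q 0" using fmact[OF eA, of a] fe mact_q by simp
    finally show "Y \<in> {q 0}" by simp
  qed
  then show False using IR pV qp unfolding irreducible_mod_def carrM zeroM by blast
qed

lemma corner_add: "idem e \<Longrightarrow> x \<in> corner e \<Longrightarrow> y \<in> corner e \<Longrightarrow> x + y \<in> corner e"
  unfolding memB by (auto simp: algebra_simps)
lemma corner_mul: "idem e \<Longrightarrow> x \<in> corner e \<Longrightarrow> y \<in> corner e \<Longrightarrow> x * y \<in> corner e"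
  unfolding memB by (simp add: mult.assoc[symmetric]) (simp add: mult.assoc)
lemma corner_sc: "calg sc \<Longrightarrow> idem e \<Longrightarrow> x \<in> corner e \<Longrightarrow> sc c x \<in> corner e"
  unfolding memB by (metis calgD(5,6))

lemma sl_sandwich: "sum_list (map (\<lambda>q. p * f q * p) xs) = p * sum_list (map f xs) * (p::'a::ring)"
  by (induction xs) (simp_all add: distrib_left distrib_right)

lemma restr_SLF:
  assumes cs: "calg sc" and ie: "idem e" and psi: "\<psi> \<in> SLF sc UNIV"
  shows "restr e \<psi> \<in> SLF sc (corner e)"
  using psi corner_add[OF ie] corner_mul[OF ie] corner_sc[OF cs ie]
  unfolding SLF_def restr_def by auto

lemma inj_lemma:
  fixes sc :: "complex \<Rightarrow> 'a::ring \<Rightarrow> 'a"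
  assumes ie: "idem e" and all: "\<forall>x::'a. x \<in> AeA e"
    and psi: "\<psi> \<in> SLF sc UNIV" and psi': "\<psi>' \<in> SLF sc UNIV"
    and agree: "\<forall>x\<in>corner e. \<psi> x = \<psi>' x"
  shows "\<psi> = \<psi>'"
proof
  fix x :: 'a
  have ee: "e * e = e" using ie unfolding idem_def .
  have padd: "\<And>x y. \<psi> (x + y) = \<psi> x + \<psi> y" "\<And>x y. \<psi>' (x + y) = \<psi>' x + \<psi>' y"
    and psym: "\<And>x y. \<psi> (x * y) = \<psi> (y * x)" "\<And>x y. \<psi>' (x * y) = \<psi>' (y * x)"
    using psi psi' unfolding SLF_def by auto
  have p0: "\<psi> 0 = 0" "\<psi>' 0 = 0" using padd(1)[of 0 0] padd(2)[of 0 0] by simp_all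
  have gen: "\<psi> (a * e * b) = \<psi>' (a * e * b)" for a b
  proof -
    have "a * e * b = (a * e) * (e * b)" using ee by (metis mult.assoc)
    moreover have eq2: "(e * b) * (a * e) = e * (b * a) * e" by (simp add: mult.assoc)
    ultimately have "\<psi> (a * e * b) = \<psi> (e * (b * a) * e)" "\<psi>' (a * e * b) = \<psi>' (e * (b * a) * e)"
      using psym(1)[of "a * e" "e * b"] psym(2)[of "a * e" "e * b"] by simp_all
    moreover have "e * (b * a) * e \<in> corner e" unfolding corner2_def by blast
    ultimately show ?thesis using agree by simp
  qed
  obtain xs where x: "x = sum_list (map (\<lambda>p. fst p * e * snd p) xs)" using all unfolding AeA_def by blast
  have "\<psi> (sum_list (map (\<lambda>p. fst p * e * snd p) xs)) = \<psi>' (sum_list (map (\<lambda>p. fst p * e * snd p) xs))"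
    by (induction xs) (simp_all add: p0 padd gen)
  then show "\<psi> x = \<psi>' x" using x by simp
qed

context
  fixes sc :: "complex \<Rightarrow> 'a::ring \<Rightarrow> 'a" and E :: "'a set" and e :: 'a
  assumes cs: "calg sc"
    and Eid: "\<forall>e\<in>E. idem e"
    and Eorth: "\<forall>e\<in>E. \<forall>f\<in>E. e \<noteq> f \<longrightarrow> e * f = 0"
    and Edec: "\<forall>x. \<exists>F g. finite F \<and> F \<subseteq> E \<times> E \<and>
            (\<forall>p\<in>F. g p \<in> corner2 (fst p) (snd p)) \<and> x = (\<Sum>p\<in>F. g p)"
    and ie: "idem e"
    and all: "\<forall>x::'a. x \<in> AeA e"
begin

definition "L0 p = (SOME xs. p = sum_list (map (\<lambda>q. fst q * e * snd q) xs))"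
definition "L1 p = map (\<lambda>q. (p * fst q * e, e * snd q * p)) (L0 p)"
definition "Aa p k = fst (L1 p ! k)"
definition "Bb p k = snd (L1 p ! k)"
definition "len p = length (L1 p)"

lemma ee': "e * e = e" using ie unfolding idem_def .

lemma L0: "p = sum_list (map (\<lambda>q. fst q * e * snd q) (L0 p))"
proof -
  have "\<exists>xs. p = sum_list (map (\<lambda>q. fst q * e * snd q) xs)" using all unfolding AeA_def by blast
  then show ?thesis unfolding L0_def by (rule someI_ex)
qed

lemma AB_props:
  assumes "p \<in> E" "k < len p"
  shows "p * Aa p k = Aa p k" "Aa p k * e = Aa p k" "e * Bb p k = Bb p k" "Bb p k * p = Bb p k"
proof -
  have pp: "p * p = p" using Eid assms unfolding idem_def by blast
  have k: "k < length (L0 p)" using assms unfolding len_def L1_def by simp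
  have A: "Aa p k = p * fst (L0 p ! k) * e" and B: "Bb p k = e * snd (L0 p ! k) * p"
    unfolding Aa_def Bb_def L1_def using k by simp_all
  show "p * Aa p k = Aa p k" unfolding A by (simp add: mult.assoc[symmetric] pp)
  show "Aa p k * e = Aa p k" unfolding A by (simp add: mult.assoc ee')
  show "e * Bb p k = Bb p k" unfolding B by (simp add: mult.assoc[symmetric] ee')
  show "Bb p k * p = Bb p k" unfolding B by (simp add: mult.assoc pp)
qed

lemma AB_sum:
  assumes "p \<in> E"
  shows "(\<Sum>k<len p. Aa p k * Bb p k) = p"
proof -
  have pp: "p * p = p" using Eid assms unfolding idem_def by blast
  have "(\<Sum>k<len p. Aa p k * Bb p k) = sum_list (map (\<lambda>q. fst q * snd q) (L1 p))"
    unfolding Aa_def Bb_def len_def sum_list_sum_nth by (simp add: atLeast0LessThan)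
  also have "\<dots> = sum_list (map (\<lambda>q. p * (fst q * e * snd q) * p) (L0 p))"
    unfolding L1_def by (simp add: o_def mult.assoc ee' flip: mult.assoc[of e e])
  also have "\<dots> = p * sum_list (map (\<lambda>q. fst q * e * snd q) (L0 p)) * p"
    by (rule sl_sandwich)
  also have "\<dots> = p" using L0[of p] pp by simp
  finally show ?thesis .
qed


definition "Ics = Sigma E (\<lambda>p. {..<len p})"
definition "alc i b = Aa (fst i) (snd i) * b"
definition "acc i \<xi> = Bb (fst i) (snd i) * \<xi>"

lemma Ics_fin: "finite P \<Longrightarrow> finite (Sigma P (\<lambda>p. {..<len p}))"
  by (rule finite_SigmaI) auto

lemma lcs_ex: "left_coord_sys sc e Ics alc acc"
  unfolding left_coord_sys_def Let_def lin_on_def Ae_mod_def lmod.simps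
proof (intro conjI)
  show "\<forall>i\<in>Ics. alc i ` corner e \<subseteq> {a * e |a. True} \<and>
        ((\<forall>x\<in>corner e. \<forall>y\<in>corner e. alc i (x + y) = alc i x + alc i y) \<and>
         (\<forall>c. \<forall>x\<in>corner e. alc i (sc c x) = sc c (alc i x))) \<and>
        (\<forall>b\<in>corner e. \<forall>b'\<in>corner e. alc i (b * b') = alc i b * b')"
  proof (intro ballI conjI allI subsetI)
    fix i assume "i \<in> Ics"
    fix y assume "y \<in> alc i ` corner e"
    then obtain b where b: "b \<in> corner e" "y = alc i b" by blast
    have "y * e = y" using b memB[OF ie] unfolding alc_def by (simp add: mult.assoc)
    then show "y \<in> {a * e |a. True}" by (metis (mono_tags, lifting) mem_Collect_eq)
  next
    fix i x y show "alc i (x + y) = alc i x + alc i y" unfolding alc_def by (simp add: distrib_left)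
  next
    fix i c x show "alc i (sc c x) = sc c (alc i x)" unfolding alc_def by (simp add: calgD(6)[OF cs])
  next
    fix i b b' show "alc i (b * b') = alc i b * b'" unfolding alc_def by (simp add: mult.assoc)
  qed
  show "\<forall>i\<in>Ics. acc i ` {a * e |a. True} \<subseteq> corner e \<and>
        ((\<forall>x\<in>{a * e |a. True}. \<forall>y\<in>{a * e |a. True}. acc i (x + y) = acc i x + acc i y) \<and>
         (\<forall>c. \<forall>x\<in>{a * e |a. True}. acc i (sc c x) = sc c (acc i x))) \<and>
        (\<forall>m\<in>{a * e |a. True}. \<forall>b\<in>corner e. acc i (m * b) = acc i m * b)"
  proof (intro ballI conjI allI subsetI)
    fix i assume i: "i \<in> Ics"
    fix y assume "y \<in> acc i ` {a * e |a. True}"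
    then obtain m where m: "m * e = m" "y = acc i m" using memM[OF ie] by blast
    have "e * Bb (fst i) (snd i) = Bb (fst i) (snd i)" using AB_props i unfolding Ics_def by auto
    then have "e * y = y" "y * e = y" using m unfolding acc_def by (simp_all add: mult.assoc[symmetric]) (simp add: mult.assoc)
    then show "y \<in> corner e" using memB[OF ie] by blast
  next
    fix i x y show "acc i (x + y) = acc i x + acc i y" unfolding acc_def by (simp add: distrib_left)
  next
    fix i c x show "acc i (sc c x) = sc c (acc i x)" unfolding acc_def by (simp add: calgD(6)[OF cs])
  next
    fix i b b' show "acc i (b * b') = acc i b * b'" unfolding acc_def by (simp add: mult.assoc)
  qed
  show "\<forall>\<xi>\<in>{a * e |a. True}. finite {i \<in> Ics. acc i \<xi> \<noteq> 0} \<and>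
        \<xi> = (\<Sum>i\<in>{i \<in> Ics. acc i \<xi> \<noteq> 0}. alc i (acc i \<xi>))"
  proof (intro ballI conjI)
    fix \<xi> :: 'a
    define P where "P = {p\<in>E. p * \<xi> \<noteq> 0}"
    have Pf: "finite P" unfolding P_def using fin_left[OF cs Eid Eorth Edec] .
    define T where "T = Sigma P (\<lambda>p. {..<len p})"
    have Tf: "finite T" unfolding T_def using Ics_fin Pf by blast
    have ST: "{i \<in> Ics. acc i \<xi> \<noteq> 0} \<subseteq> T"
    proof
      fix i assume i: "i \<in> {i \<in> Ics. acc i \<xi> \<noteq> 0}"
      obtain p k where pk: "i = (p, k)" by fastforce
      have pE: "p \<in> E" "k < len p" using i pk unfolding Ics_def by auto
      have "Bb p k * \<xi> \<noteq> 0" using i pk unfolding acc_def by simp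
      then have "p * \<xi> \<noteq> 0" using AB_props(4)[OF pE] by (metis mult.assoc mult_zero_right)
      then show "i \<in> T" unfolding T_def P_def using pk pE by auto
    qed
    show "finite {i \<in> Ics. acc i \<xi> \<noteq> 0}" using ST Tf finite_subset by blast
    have TI: "T \<subseteq> Ics" unfolding T_def Ics_def P_def by auto
    have "(\<Sum>i\<in>{i \<in> Ics. acc i \<xi> \<noteq> 0}. alc i (acc i \<xi>)) = (\<Sum>i\<in>T. alc i (acc i \<xi>))"
    proof (rule sum.mono_neutral_left[OF Tf ST])
      show "\<forall>i\<in>T - {i \<in> Ics. acc i \<xi> \<noteq> 0}. alc i (acc i \<xi>) = 0"
        using TI unfolding alc_def by auto
    qed
    also have "\<dots> = (\<Sum>p\<in>P. \<Sum>k<len p. Aa p k * (Bb p k * \<xi>))"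
      unfolding T_def alc_def acc_def by (subst sum.Sigma) (use Pf in \<open>auto simp: case_prod_beta\<close>)
    also have "\<dots> = (\<Sum>p\<in>P. p * \<xi>)"
    proof (rule sum.cong)
      fix p assume "p \<in> P"
      then have pE: "p \<in> E" unfolding P_def by auto
      have "(\<Sum>k<len p. Aa p k * (Bb p k * \<xi>)) = (\<Sum>k<len p. Aa p k * Bb p k) * \<xi>"
        by (simp add: sum_distrib_right mult.assoc)
      then show "(\<Sum>k<len p. Aa p k * (Bb p k * \<xi>)) = p * \<xi>" using AB_sum[OF pE] by simp
    qed simp
    also have "\<dots> = \<xi>" by (rule unit_sum[OF cs Eid Eorth Edec Pf]) (auto simp: P_def)
    finally show "\<xi> = (\<Sum>i\<in>{i \<in> Ics. acc i \<xi> \<noteq> 0}. alc i (acc i \<xi>))" by simp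
  qed
  show "\<forall>x. finite {i \<in> Ics. \<exists>b\<in>corner e. x * alc i b \<noteq> 0} \<and>
        finite {i \<in> Ics. \<exists>m\<in>{a * e |a. True}. acc i (x * m) \<noteq> 0}"
  proof (intro allI conjI)
    fix x :: 'a
    have "{i \<in> Ics. \<exists>b\<in>corner e. x * alc i b \<noteq> 0} \<subseteq> Sigma {p\<in>E. x * p \<noteq> 0} (\<lambda>p. {..<len p})"
    proof
      fix i assume i: "i \<in> {i \<in> Ics. \<exists>b\<in>corner e. x * alc i b \<noteq> 0}"
      obtain p k where pk: "i = (p, k)" by fastforce
      have pE: "p \<in> E" "k < len p" using i pk unfolding Ics_def by auto
      obtain b where "x * (Aa p k * b) \<noteq> 0" using i pk unfolding alc_def by auto
      then have "x * p \<noteq> 0" using AB_props(1)[OF pE] by (metis mult.assoc mult_zero_left)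
      then show "i \<in> Sigma {p\<in>E. x * p \<noteq> 0} (\<lambda>p. {..<len p})" using pk pE by auto
    qed
    then show "finite {i \<in> Ics. \<exists>b\<in>corner e. x * alc i b \<noteq> 0}"
      using Ics_fin[OF fin_right[OF cs Eid Eorth Edec]] finite_subset by blast
    have "{i \<in> Ics. \<exists>m\<in>{a * e |a. True}. acc i (x * m) \<noteq> 0} \<subseteq> Sigma {p\<in>E. p * x \<noteq> 0} (\<lambda>p. {..<len p})"
    proof
      fix i assume i: "i \<in> {i \<in> Ics. \<exists>m\<in>{a * e |a. True}. acc i (x * m) \<noteq> 0}"
      obtain p k where pk: "i = (p, k)" by fastforce
      have pE: "p \<in> E" "k < len p" using i pk unfolding Ics_def by auto
      obtain m where "Bb p k * (x * m) \<noteq> 0" using i pk unfolding acc_def by auto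
      then have "p * x \<noteq> 0" using AB_props(4)[OF pE] by (metis mult.assoc mult_zero_left mult_zero_right)
      then show "i \<in> Sigma {p\<in>E. p * x \<noteq> 0} (\<lambda>p. {..<len p})" using pk pE by auto
    qed
    then show "finite {i \<in> Ics. \<exists>m\<in>{a * e |a. True}. acc i (x * m) \<noteq> 0}"
      using Ics_fin[OF fin_left[OF cs Eid Eorth Edec]] finite_subset by blast
  qed
qed

end

lemma sum_AeA: "finite F \<Longrightarrow> (\<forall>q\<in>F. g q \<in> AeA e) \<Longrightarrow> sum g F \<in> AeA e"
proof (induction F rule: finite_induct)
  case empty then show ?case using AeA_0 by simp
next
  case (insert y F) then show ?case by (simp add: AeA_add)
qed

theorem theorem6p6:
  fixes sc :: "complex \<Rightarrow> 'a::ring \<Rightarrow> 'a" and e :: 'a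
    and I :: "'i set" and \<alpha> ac :: "'i \<Rightarrow> 'a \<Rightarrow> 'a"
  assumes "strongly_AUF sc"
    and "generating_idem sc e"
  shows "bij_betw (restr e) (SLF sc UNIV) (SLF sc (corner e))
    \<and> (\<forall>\<psi> \<psi>' c d. restr e (\<lambda>x. c * \<psi> x + d * \<psi>' x)
                      = (\<lambda>x. c * restr e \<psi> x + d * restr e \<psi>' x))
    \<and> (left_coord_sys sc e I \<alpha> ac \<longrightarrow>
           (\<forall>\<phi>\<in>SLF sc (corner e). pseudotrace I \<alpha> ac e \<phi> \<in> SLF sc UNIV
                                   \<and> restr e (pseudotrace I \<alpha> ac e \<phi>) = \<phi>)
         \<and> (\<forall>\<psi>\<in>SLF sc UNIV. pseudotrace I \<alpha> ac e (restr e \<psi>) = \<psi>))"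
proof -
  have cs: "calg sc" using assms(1) unfolding strongly_AUF_def AUF_def by blast
  obtain E :: "'a set" where Eid: "\<forall>e\<in>E. idem e"
    and Eorth: "\<forall>e\<in>E. \<forall>f\<in>E. e \<noteq> f \<longrightarrow> e * f = 0"
    and Edec: "\<forall>x. \<exists>F g. finite F \<and> F \<subseteq> E \<times> E \<and>
            (\<forall>p\<in>F. g p \<in> corner2 (fst p) (snd p)) \<and> x = (\<Sum>p\<in>F. g p)"
  proof -
    have "AUF sc" using assms(1) unfolding strongly_AUF_def by (rule conjunct1)
    then have "\<exists>E::'a set. (\<forall>e\<in>E. idem e) \<and>
     (\<forall>e\<in>E. \<forall>f\<in>E. e \<noteq> f \<longrightarrow> e * f = 0) \<and>
     (\<forall>e\<in>E. \<forall>f\<in>E. fin_dim sc (corner2 e f)) \<and>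
     (\<forall>x. \<exists>F g. finite F \<and> F \<subseteq> E \<times> E \<and>
            (\<forall>p\<in>F. g p \<in> corner2 (fst p) (snd p)) \<and> x = (\<Sum>p\<in>F. g p))"
      unfolding AUF_def by (rule conjunct2)
    then show ?thesis by (elim exE conjE) (rule that)
  qed
  have ie: "idem e" using assms(2) unfolding generating_idem_def by blast
  have lu: "\<forall>x::'a. \<exists>u. u * x = x" by (intro allI) (rule local_unit[OF cs Eid Eorth Edec])
  have pE: "p \<in> AeA e" if "p \<in> E" for p
  proof -
    have "idem p" using Eid that by (rule bspec)
    then have "p * p = p" unfolding idem_def .
    then show ?thesis by (rule gen_AeA[OF cs lu assms(2)])
  qed
  have all: "\<forall>x::'a. x \<in> AeA e"
  proof
    fix x :: 'a
    obtain F g where F: "finite F" "F \<subseteq> E \<times> E" "\<forall>p\<in>F. g p \<in> corner2 (fst p) (snd p)"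
      "x = (\<Sum>p\<in>F. g p)" using Edec[THEN spec[of _ x]] by (elim exE conjE) (rule that)
    have gA: "g q \<in> AeA e" if "q \<in> F" for q
    proof -
      have "g q \<in> corner2 (fst q) (snd q)" using F(3) that by (rule bspec)
      then obtain a where "g q = fst q * a * snd q" unfolding corner2_def by blast
      moreover have "fst q \<in> AeA e" using pE F(2) that by auto
      ultimately show ?thesis using AeA_rmul[OF AeA_rmul[of "fst q" e a], of "snd q"] by simp
    qed
    have "(\<Sum>p\<in>F. g p) \<in> AeA e" using sum_AeA[OF F(1)] gA by blast
    then show "x \<in> AeA e" using F(4) by simp
  qed
  have inj: "\<psi> = \<psi>'" if "\<psi> \<in> SLF sc UNIV" "\<psi>' \<in> SLF sc UNIV" "restr e \<psi> = restr e \<psi>'" for \<psi> \<psi>'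
  proof (rule inj_lemma[OF ie all that(1,2)])
    show "\<forall>x\<in>corner e. \<psi> x = \<psi>' x"
    proof
      fix x assume "x \<in> corner e"
      then show "\<psi> x = \<psi>' x" using fun_cong[OF that(3), of x] unfolding restr_def by simp
    qed
  qed
  have lcs0: "left_coord_sys sc e (Ics E e) (alc e) (acc e)" by (rule lcs_ex[OF cs Eid Eorth Edec ie all])
  have part1: "bij_betw (restr e) (SLF sc UNIV) (SLF sc (corner e))"
    unfolding bij_betw_def
  proof
    show "inj_on (restr e) (SLF sc UNIV)" unfolding inj_on_def using inj by blast
    show "restr e ` SLF sc UNIV = SLF sc (corner e)"
    proof
      show "restr e ` SLF sc UNIV \<subseteq> SLF sc (corner e)" using restr_SLF[OF cs ie] by blast
      show "SLF sc (corner e) \<subseteq> restr e ` SLF sc UNIV"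
      proof
        fix \<phi> assume phi: "\<phi> \<in> SLF sc (corner e)"
        have "pseudotrace (Ics E e) (alc e) (acc e) e \<phi> \<in> SLF sc UNIV" by (rule tr_SLF[OF cs ie lcs0 phi])
        moreover have "restr e (pseudotrace (Ics E e) (alc e) (acc e) e \<phi>) = \<phi>" by (rule tr_restr[OF cs ie lcs0 phi])
        ultimately show "\<phi> \<in> restr e ` SLF sc UNIV" by (metis image_eqI)
      qed
    qed
  qed
  have part2: "\<forall>\<psi> \<psi>' c d. restr e (\<lambda>x. c * \<psi> x + d * \<psi>' x)
                      = (\<lambda>x. c * restr e \<psi> x + d * restr e \<psi>' x)"
    unfolding restr_def by auto
  have part3: "left_coord_sys sc e I \<alpha> ac \<longrightarrow>
           (\<forall>\<phi>\<in>SLF sc (corner e). pseudotrace I \<alpha> ac e \<phi> \<in> SLF sc UNIV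
                                   \<and> restr e (pseudotrace I \<alpha> ac e \<phi>) = \<phi>)
         \<and> (\<forall>\<psi>\<in>SLF sc UNIV. pseudotrace I \<alpha> ac e (restr e \<psi>) = \<psi>)"
  proof (intro impI conjI ballI)
    assume lcs: "left_coord_sys sc e I \<alpha> ac"
    fix \<phi> assume phi: "\<phi> \<in> SLF sc (corner e)"
    show "pseudotrace I \<alpha> ac e \<phi> \<in> SLF sc UNIV" by (rule tr_SLF[OF cs ie lcs phi])
    show "restr e (pseudotrace I \<alpha> ac e \<phi>) = \<phi>" by (rule tr_restr[OF cs ie lcs phi])
  next
    assume lcs: "left_coord_sys sc e I \<alpha> ac"
    fix \<psi> assume psi: "\<psi> \<in> SLF sc UNIV"
    have r: "restr e \<psi> \<in> SLF sc (corner e)" by (rule restr_SLF[OF cs ie psi])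
    show "pseudotrace I \<alpha> ac e (restr e \<psi>) = \<psi>"
      by (rule inj[OF tr_SLF[OF cs ie lcs r] psi tr_restr[OF cs ie lcs r]])
  qed
  show ?thesis using part1 part2 part3 by blast
qed


end
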